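(* Let $\alpha = \frac{P}{4Q}$ where $P$ is an odd integer and $Q$ is a positive integer with $P$ and $Q$ relatively prime, and let $|\phi\rangle \in \mathbb{C}^2$ be any normalized coin state. Then the inhomogeneous quantum walk with parameter $\alpha$ started from $|0,\phi\rangle$ is restricted to the finite interval $[-Q,Q]$: for every time $t \ge 0$ and every $n \in \mathbb{Z}$ with $|n| > Q$, $\Pr(n;t) = 0$.
   Context: The Hilbert space is $\ell^2(\mathbb{Z}) \otimes \mathbb{C}^2$ with orthonormal basis $|n,\xi\rangle = |n\rangle \otimes |\xi\rangle$, $n \in \mathbb{Z}$, $\xi \in \{L,R\}$, where $|L\rangle = (1,0)^T$, $|R\rangle = (0,1)^T$. The shift operator is $W = \sum_n \left( |n-1,L\rangle\langle n,L| + |n+1,R\rangle\langle n,R| \right)$. For $\alpha \in \mathbb{R}$, the coin operator is $C = \sum_n |n\rangle\langle n| \otimes \hat C_n$ with $\hat C_n = \begin{pmatrix} \cos(2\pi\alpha n) & -\sin(2\pi\alpha n) \\ \sin(2\pi\alpha n) & \cos(2\pi\alpha n)\end{pmatrix}$. The one-step evolution of the inhomogeneous quantum walk is $WC$, and starting from $|0,\phi\rangle$ the probability of being at position $n$ at time $t$ is $\Pr(n;t) = \sum_{\xi \in \{L,R\}} |\langle n,\xi| (WC)^t |0,\phi\rangle|^2$. *)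

theory Defs
  imports Complex_Main
begin

text \<open>States of the walk: psi n = (amplitude at |n,L>, amplitude at |n,R>).\<close>
type_synonym qstate = "int \<Rightarrow> complex \<times> complex"

definition theta :: "real \<Rightarrow> int \<Rightarrow> real" where
  "theta \<alpha> n = 2 * pi * \<alpha> * real_of_int n"

definition coin_op :: "real \<Rightarrow> qstate \<Rightarrow> qstate" where
  "coin_op \<alpha> \<psi> n =
     (let c = complex_of_real (cos (theta \<alpha> n)); s = complex_of_real (sin (theta \<alpha> n));
          a = fst (\<psi> n); b = snd (\<psi> n)
      in (c * a - s * b, s * a + c * b))"

text \<open>Shift W: |n,L> to |n-1,L>, |n,R> to |n+1,R>.\<close>
definition shift_op :: "qstate \<Rightarrow> qstate" where
  "shift_op \<psi> n = (fst (\<psi> (n + 1)), snd (\<psi> (n - 1)))"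

definition walk_step :: "real \<Rightarrow> qstate \<Rightarrow> qstate" where
  "walk_step \<alpha> \<psi> = shift_op (coin_op \<alpha> \<psi>)"

definition walk :: "real \<Rightarrow> complex \<times> complex \<Rightarrow> nat \<Rightarrow> qstate" where
  "walk \<alpha> \<phi> t = (walk_step \<alpha> ^^ t) (\<lambda>n. if n = 0 then \<phi> else (0, 0))"

definition prob :: "real \<Rightarrow> complex \<times> complex \<Rightarrow> int \<Rightarrow> nat \<Rightarrow> real" where
  "prob \<alpha> \<phi> n t = (cmod (fst (walk \<alpha> \<phi> t n)))\<^sup>2 + (cmod (snd (walk \<alpha> \<phi> t n)))\<^sup>2"

end

theory Submission
  imports Defs
begin

definition inv_ok :: "int \<Rightarrow> qstate \<Rightarrow> bool" where
  "inv_ok Q \<psi> \<longleftrightarrow> (\<forall>m. \<bar>m\<bar> > Q \<longrightarrow> \<psi> m = (0,0)) \<and> fst (\<psi> Q) = 0 \<and> snd (\<psi> (-Q)) = 0"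

lemma step_ok:
  assumes Q: "Q > 0" and c1: "cos (theta \<alpha> Q) = 0" and c2: "cos (theta \<alpha> (-Q)) = 0"
    and I: "inv_ok Q \<psi>"
  shows "inv_ok Q (walk_step \<alpha> \<psi>)"
proof -
  have z: "\<And>m. \<bar>m\<bar> > Q \<Longrightarrow> \<psi> m = (0,0)" using I by (simp add: inv_ok_def)
  have f: "fst (\<psi> Q) = 0" and s: "snd (\<psi> (-Q)) = 0" using I by (auto simp: inv_ok_def)
  have cz: "\<And>m. \<bar>m\<bar> > Q \<Longrightarrow> coin_op \<alpha> \<psi> m = (0,0)"
    using z by (simp add: coin_op_def Let_def)
  have A: "\<forall>m. \<bar>m\<bar> > Q \<longrightarrow> walk_step \<alpha> \<psi> m = (0,0)"
  proof (intro allI impI)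
    fix m :: int assume m: "\<bar>m\<bar> > Q"
    show "walk_step \<alpha> \<psi> m = (0,0)"
    proof (cases "m = Q + 1 \<or> m = - Q - 1")
      case True
      then show ?thesis
      proof
        assume e: "m = Q + 1"
        have "fst (coin_op \<alpha> \<psi> (m+1)) = 0" using cz[of "m+1"] e Q by simp
        moreover have "snd (coin_op \<alpha> \<psi> (m-1)) = 0"
          using e f c1 by (simp add: coin_op_def Let_def)
        ultimately show ?thesis by (simp add: walk_step_def shift_op_def prod_eq_iff)
      next
        assume e: "m = - Q - 1"
        have "snd (coin_op \<alpha> \<psi> (m-1)) = 0" using cz[of "m-1"] e Q by simp
        moreover have "fst (coin_op \<alpha> \<psi> (m+1)) = 0"
          using e s c2 by (simp add: coin_op_def Let_def)
        ultimately show ?thesis by (simp add: walk_step_def shift_op_def prod_eq_iff)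
      qed
    next
      case False
      then have "\<bar>m+1\<bar> > Q" "\<bar>m-1\<bar> > Q" using m by auto
      then show ?thesis using cz by (simp add: walk_step_def shift_op_def)
    qed
  qed
  have B: "fst (walk_step \<alpha> \<psi> Q) = 0"
    using cz[of "Q+1"] Q by (simp add: walk_step_def shift_op_def)
  have C: "snd (walk_step \<alpha> \<psi> (-Q)) = 0"
    using cz[of "-Q-1"] Q by (simp add: walk_step_def shift_op_def)
  show ?thesis using A B C by (simp add: inv_ok_def)
qed

theorem lemma1:
  fixes P Q :: int and \<phi> :: "complex \<times> complex" and t :: nat and n :: int
  assumes "odd P" and "Q > 0" and "coprime P Q"
    and "(cmod (fst \<phi>))\<^sup>2 + (cmod (snd \<phi>))\<^sup>2 = 1"
    and "\<bar>n\<bar> > Q"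
  shows "prob (real_of_int P / (4 * real_of_int Q)) \<phi> n t = 0"
proof -
  define \<alpha> where "\<alpha> = real_of_int P / (4 * real_of_int Q)"
  have Qr: "real_of_int Q \<noteq> 0" using assms(2) by simp
  have t1: "theta \<alpha> Q = of_int P * (pi/2)"
    using Qr by (simp add: theta_def \<alpha>_def field_simps)
  have t2: "theta \<alpha> (-Q) = of_int (-P) * (pi/2)"
    using Qr by (simp add: theta_def \<alpha>_def field_simps)
  have c1: "cos (theta \<alpha> Q) = 0" unfolding cos_zero_iff_int using t1 assms(1) by blast
  have c2: "cos (theta \<alpha> (-Q)) = 0" proof - have "odd (-P)" using assms(1) by simp then show ?thesis unfolding cos_zero_iff_int using t2 by blast qed
  have "inv_ok Q (walk \<alpha> \<phi> t)"
  proof (induction t)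
    case 0
    show ?case using assms(2) by (simp add: walk_def inv_ok_def)
  next
    case (Suc t)
    have "walk \<alpha> \<phi> (Suc t) = walk_step \<alpha> (walk \<alpha> \<phi> t)" by (simp add: walk_def)
    then show ?case using step_ok[OF assms(2) c1 c2 Suc] by simp
  qed
  then have "walk \<alpha> \<phi> t n = (0,0)" using assms(5) by (simp add: inv_ok_def)
  then show ?thesis by (simp add: prob_def \<alpha>_def[symmetric])
qed

end
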